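(* A function $f:\mathbb{N}\to\mathbb{N}$ is obliviously-computable if and only if $f$ is semilinear and nondecreasing.
   Context: A chemical reaction network (CRN) is a pair $(\mathcal{S},\mathcal{R})$ of a finite set of species and a finite set of reactions $(\vec{R},\vec{P})\in\mathbb{N}^{\mathcal{S}}\times\mathbb{N}^{\mathcal{S}}$. A configuration is $\vec{C}\in\mathbb{N}^{\mathcal{S}}$; a reaction is applicable if $\vec{R}\le\vec{C}$ and yields $\vec{C}-\vec{R}+\vec{P}$; reachability is via finite sequences of applicable reactions. To compute $f:\mathbb{N}\to\mathbb{N}$ the CRN has an input species $X$, output species $Y$, leader species $L$; the initial configuration for input $x$ has $x$ copies of $X$, one $L$, nothing else. $\vec{C}$ is stable if all configurations reachable from it have the same count of $Y$. The CRN stably computes $f$ if for every input $x$ and every $\vec{C}$ reachable from the initial configuration, some stable $\vec{O}$ reachable from $\vec{C}$ has $\vec{O}(Y)=f(x)$. The CRN is output-oblivious if $Y$ is never a reactant ($\vec{R}(Y)=0$ for all reactions). $f$ is obliviously-computable if stably computed by an output-oblivious CRN. A set $S\subseteq\mathbb{N}^d$ is semilinear if it is a finite Boolean combination of threshold sets $\{\vec{x}:\vec{a}\cdot\vec{x}\ge b\}$ ($\vec{a}\in\mathbb{Z}^d,b\in\mathbb{Z}$) and mod sets $\{\vec{x}:\vec{a}\cdot\vec{x}\equiv b\bmod c\}$ ($c\in\mathbb{N}_+$). A function is semilinear if it is a finite union of affine partial functions whose domains are disjoint semilinear sets. *)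

theory Defs
  imports Complex_Main
begin

text \<open>Species are represented by natural numbers; a CRN uses a finite set S of them.
  Configurations are functions nat \<Rightarrow> nat (counts), reactions are pairs (R, P) of
  reactant and product vectors supported in S.\<close>

type_synonym config = "nat \<Rightarrow> nat"
type_synonym reaction = "config \<times> config"

definition valid_crn :: "nat set \<Rightarrow> reaction set \<Rightarrow> nat \<Rightarrow> nat \<Rightarrow> nat \<Rightarrow> bool" where
  "valid_crn S R X Y L \<longleftrightarrow>
     finite S \<and> finite R \<and> X \<in> S \<and> Y \<in> S \<and> L \<in> S \<and>
     X \<noteq> Y \<and> X \<noteq> L \<and> Y \<noteq> L \<and>
     (\<forall>(r, p) \<in> R. \<forall>s. s \<notin> S \<longrightarrow> r s = 0 \<and> p s = 0)"

definition applicable :: "reaction \<Rightarrow> config \<Rightarrow> bool" where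
  "applicable rp C \<longleftrightarrow> (\<forall>s. fst rp s \<le> C s)"

definition apply_reaction :: "reaction \<Rightarrow> config \<Rightarrow> config" where
  "apply_reaction rp C = (\<lambda>s. C s - fst rp s + snd rp s)"

definition step_rel :: "reaction set \<Rightarrow> (config \<times> config) set" where
  "step_rel R = {(C, apply_reaction rp C) | C rp. rp \<in> R \<and> applicable rp C}"

definition reachable :: "reaction set \<Rightarrow> config \<Rightarrow> config \<Rightarrow> bool" where
  "reachable R C D \<longleftrightarrow> (C, D) \<in> (step_rel R)\<^sup>*"

definition init_config :: "nat \<Rightarrow> nat \<Rightarrow> nat \<Rightarrow> config" where
  "init_config X L x = (\<lambda>s. if s = X then x else if s = L then 1 else 0)"

definition stable :: "reaction set \<Rightarrow> nat \<Rightarrow> config \<Rightarrow> bool" where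
  "stable R Y C \<longleftrightarrow> (\<forall>D. reachable R C D \<longrightarrow> D Y = C Y)"

definition stably_computes ::
  "reaction set \<Rightarrow> nat \<Rightarrow> nat \<Rightarrow> nat \<Rightarrow> (nat \<Rightarrow> nat) \<Rightarrow> bool" where
  "stably_computes R X Y L f \<longleftrightarrow>
     (\<forall>x C. reachable R (init_config X L x) C \<longrightarrow>
        (\<exists>Out. reachable R C Out \<and> stable R Y Out \<and> Out Y = f x))"

definition output_oblivious :: "reaction set \<Rightarrow> nat \<Rightarrow> bool" where
  "output_oblivious R Y \<longleftrightarrow> (\<forall>rp \<in> R. fst rp Y = 0)"

definition obliviously_computable :: "(nat \<Rightarrow> nat) \<Rightarrow> bool" where
  "obliviously_computable f \<longleftrightarrow>
     (\<exists>S R X Y L. valid_crn S R X Y L \<and> output_oblivious R Y \<and> stably_computes R X Y L f)"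

inductive semilinear_set :: "nat set \<Rightarrow> bool" where
  threshold: "semilinear_set {x. a * int x \<ge> b}"
| modset: "c > 0 \<Longrightarrow> semilinear_set {x. a * int x mod int c = b mod int c}"
| compl: "semilinear_set A \<Longrightarrow> semilinear_set (- A)"
| union: "semilinear_set A \<Longrightarrow> semilinear_set B \<Longrightarrow> semilinear_set (A \<union> B)"
| inter: "semilinear_set A \<Longrightarrow> semilinear_set B \<Longrightarrow> semilinear_set (A \<inter> B)"

text \<open>A function is semilinear if it is a finite union of affine partial functions
  x \<mapsto> a x + b (a, b rational) whose domains are pairwise disjoint semilinear sets
  (covering the whole domain of the total function f).\<close>

definition semilinear_fun :: "(nat \<Rightarrow> nat) \<Rightarrow> bool" where
  "semilinear_fun f \<longleftrightarrow>
     (\<exists>pieces :: (rat \<times> rat \<times> nat set) list.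
        (\<forall>i < length pieces. semilinear_set (snd (snd (pieces ! i)))) \<and>
        (\<forall>i < length pieces. \<forall>j < length pieces. i \<noteq> j \<longrightarrow>
            snd (snd (pieces ! i)) \<inter> snd (snd (pieces ! j)) = {}) \<and>
        (\<forall>x. \<exists>i < length pieces. x \<in> snd (snd (pieces ! i))) \<and>
        (\<forall>i < length pieces. \<forall>x \<in> snd (snd (pieces ! i)).
            of_nat (f x) = fst (pieces ! i) * of_nat x + fst (snd (pieces ! i))))"

end

theory Submission
  imports Defs
begin

lemma bdd_mono_evconst:
  fixes v :: "nat \<Rightarrow> nat"
  assumes mono: "\<And>k k'. k \<le> k' \<Longrightarrow> v k \<le> v k'" and bd: "\<And>k. v k \<le> M"
  shows "\<exists>K. \<forall>k\<ge>K. v k = v K"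
proof -
  have fin: "finite (range v)" by (rule finite_subset[of _ "{..M}"]) (auto intro: bd)
  obtain K where K: "v K = Max (range v)"
    using Max_in[OF fin] by auto
  have "\<forall>k\<ge>K. v k = v K"
  proof (intro allI impI)
    fix k assume "K \<le> k"
    then have "v K \<le> v k" by (rule mono)
    moreover have "v k \<le> v K" using K Max_ge[OF fin] by auto
    ultimately show "v k = v K" by simp
  qed
  then show ?thesis by blast
qed

lemma dec_evconst:
  fixes v :: "nat \<Rightarrow> nat"
  assumes "\<And>k k'. k \<le> k' \<Longrightarrow> v k' \<le> v k"
  shows "\<exists>K. \<forall>k\<ge>K. v k = v K"
proof -
  have fin: "finite (range v)" by (rule finite_subset[of _ "{..v 0}"]) (auto intro: assms)
  obtain K where K: "v K = Min (range v)"
    using Min_in[OF fin] by auto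
  have "\<forall>k\<ge>K. v k = v K"
  proof (intro allI impI)
    fix k assume "K \<le> k"
    then have "v k \<le> v K" by (rule assms)
    moreover have "v K \<le> v k" using K Min_le[OF fin] by auto
    ultimately show "v k = v K" by simp
  qed
  then show ?thesis by blast
qed

lemma nat_incsub:
  fixes s :: "nat \<Rightarrow> nat"
  shows "\<exists>g::nat\<Rightarrow>nat. strict_mono g \<and> (\<forall>k k'. k \<le> k' \<longrightarrow> s (g k) \<le> s (g k'))"
proof -
  obtain g :: "nat\<Rightarrow>nat" where g: "strict_mono g" "monoseq (\<lambda>n. s (g n))" using seq_monosub by blast
  have "(\<forall>m. \<forall>n\<ge>m. s (g m) \<le> s (g n)) \<or> (\<forall>m. \<forall>n\<ge>m. s (g n) \<le> s (g m))"
    using g(2) unfolding monoseq_def .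
  then show ?thesis
  proof
    assume "\<forall>m. \<forall>n\<ge>m. s (g m) \<le> s (g n)"
    then show ?thesis using g(1) by blast
  next
    assume A: "\<forall>m. \<forall>n\<ge>m. s (g n) \<le> s (g m)"
    have dec: "\<And>k k'. k \<le> k' \<Longrightarrow> s (g k') \<le> s (g k)" using A by simp
    obtain K where K: "\<forall>k\<ge>K. s (g k) = s (g K)" using dec_evconst[of "\<lambda>k. s (g k)", OF dec] by blast
    have m1: "strict_mono (\<lambda>k. g (K + k))" using g(1) by (simp add: strict_mono_def)
    have m2: "\<forall>k k'. k \<le> k' \<longrightarrow> s (g (K + k)) \<le> s (g (K + k'))"
    proof (intro allI impI)
      fix k k' :: nat
      have "s (g (K + k)) = s (g K)" using K[rule_format, OF le_add1] .
      moreover have "s (g (K + k')) = s (g K)" using K[rule_format, OF le_add1] .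
      ultimately show "s (g (K + k)) \<le> s (g (K + k'))" by simp
    qed
    show ?thesis by (rule exI[where x="\<lambda>k. g (K + k)"], rule conjI[OF m1 m2])
  qed
qed

lemma dickson:
  fixes v :: "nat \<Rightarrow> nat \<Rightarrow> nat"
  assumes "finite S"
  shows "\<exists>\<sigma>::nat\<Rightarrow>nat. strict_mono \<sigma> \<and> (\<forall>s\<in>S. \<forall>k k'. k \<le> k' \<longrightarrow> v (\<sigma> k) s \<le> v (\<sigma> k') s)"
  using assms
proof (induction S rule: finite_induct)
  case empty
  show ?case by (rule exI[where x=id]) (simp add: strict_mono_def)
next
  case (insert a S)
  then obtain \<sigma> :: "nat\<Rightarrow>nat" where \<sigma>: "strict_mono \<sigma>" "\<forall>s\<in>S. \<forall>k k'. k \<le> k' \<longrightarrow> v (\<sigma> k) s \<le> v (\<sigma> k') s" by blast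
  obtain g :: "nat\<Rightarrow>nat" where g: "strict_mono g" "\<forall>k k'. k \<le> k' \<longrightarrow> v (\<sigma> (g k)) a \<le> v (\<sigma> (g k')) a"
    using nat_incsub[of "\<lambda>k. v (\<sigma> k) a"] by blast
  have m1: "strict_mono (\<sigma> \<circ> g)" using \<sigma>(1) g(1) by (simp add: strict_mono_def)
  have m2: "\<forall>s\<in>insert a S. \<forall>k k'. k \<le> k' \<longrightarrow> v ((\<sigma> \<circ> g) k) s \<le> v ((\<sigma> \<circ> g) k') s"
  proof (intro ballI allI impI)
    fix s k k' assume s: "s \<in> insert a S" and kk: "(k::nat) \<le> k'"
    show "v ((\<sigma> \<circ> g) k) s \<le> v ((\<sigma> \<circ> g) k') s"
    proof (cases "s = a")
      case True then show ?thesis using g(2) kk by simp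
    next
      case False
      then have "s \<in> S" using s by simp
      moreover have "g k \<le> g k'" using g(1) kk by (simp add: strict_mono_less_eq)
      ultimately show ?thesis using \<sigma>(2) by simp
    qed
  qed
  show ?case by (rule exI[where x="\<sigma> \<circ> g"], rule conjI[OF m1 m2])
qed



definition addc :: "config \<Rightarrow> config \<Rightarrow> config" where
  "addc C D = (\<lambda>s. C s + D s)"

definition xs :: "nat \<Rightarrow> nat \<Rightarrow> config" where
  "xs X m = (\<lambda>s. if s = X then m else 0)"

lemma step_relI: "rp \<in> R \<Longrightarrow> applicable rp C \<Longrightarrow> (C, apply_reaction rp C) \<in> step_rel R"
  unfolding step_rel_def by blast

lemma step_add:
  assumes "(C, D) \<in> step_rel R"
  shows "(addc C E, addc D E) \<in> step_rel R"
proof -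
  obtain rp where rp: "rp \<in> R" "applicable rp C" "D = apply_reaction rp C"
    using assms unfolding step_rel_def by blast
  have app: "applicable rp (addc C E)" using rp(2) unfolding applicable_def addc_def
    by (metis add.commute trans_le_add2)
  have "apply_reaction rp (addc C E) = addc D E"
  proof (rule ext)
    fix s
    have "fst rp s \<le> C s" using rp(2) unfolding applicable_def by blast
    then show "apply_reaction rp (addc C E) s = addc D E s"
      using rp(3) unfolding apply_reaction_def addc_def by simp
  qed
  then show ?thesis using step_relI[OF rp(1) app] by simp
qed

lemma reach_add:
  assumes "reachable R C D"
  shows "reachable R (addc C E) (addc D E)"
proof -
  have "(C, D) \<in> (step_rel R)\<^sup>*" using assms unfolding reachable_def .
  then have "(addc C E, addc D E) \<in> (step_rel R)\<^sup>*"
  proof (induction rule: rtrancl_induct)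
    case base then show ?case by simp
  next
    case (step y z)
    then show ?case using step_add[OF step(2)] by (meson rtrancl.rtrancl_into_rtrancl)
  qed
  then show ?thesis unfolding reachable_def .
qed

lemma reach_trans: "reachable R C D \<Longrightarrow> reachable R D E \<Longrightarrow> reachable R C E"
  unfolding reachable_def by simp

lemma reach_refl: "reachable R C C"
  unfolding reachable_def by simp

lemma addc_zero[simp]: "addc C (xs X 0) = C"
  unfolding addc_def xs_def by auto

lemma addc_assoc: "addc (addc A B) D = addc A (addc B D)"
  unfolding addc_def by auto

lemma addc_comm: "addc A B = addc B A"
  unfolding addc_def by auto

lemma xs_add: "addc (xs X m) (xs X n) = xs X (m + n)"
  unfolding addc_def xs_def by auto

lemma obl_mono:
  assumes obl: "output_oblivious R Y" and r: "reachable R C D"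
  shows "C Y \<le> D Y"
proof -
  have "(C, D) \<in> (step_rel R)\<^sup>*" using r unfolding reachable_def .
  then show ?thesis
  proof (induction rule: rtrancl_induct)
    case base then show ?case by simp
  next
    case (step y z)
    obtain rp where rp: "rp \<in> R" "z = apply_reaction rp y"
      using step(2) unfolding step_rel_def by blast
    have "fst rp Y = 0" using obl rp(1) unfolding output_oblivious_def by blast
    then have "y Y \<le> z Y" using rp(2) unfolding apply_reaction_def by simp
    then show ?case using step(3) by simp
  qed
qed

lemma stable_down:
  assumes st: "stable R Y C'" and le: "\<And>s. C s \<le> C' s"
  shows "stable R Y C"
  unfolding stable_def
proof (intro allI impI)
  fix D assume r: "reachable R C D"
  define W where "W = (\<lambda>s. C' s - C s)"
  have C': "addc C W = C'" unfolding W_def addc_def using le by (auto intro!: ext)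
  have "reachable R C' (addc D W)" using reach_add[OF r, of W] C' by simp
  then have "addc D W Y = C' Y" using st unfolding stable_def by blast
  then show "D Y = C Y" using C' unfolding addc_def by (metis add_right_cancel)
qed

lemma support:
  assumes v: "valid_crn S R X Y L" and r: "reachable R (init_config X L x) C"
  shows "\<forall>s. s \<notin> S \<longrightarrow> C s = 0"
proof -
  have "(init_config X L x, C) \<in> (step_rel R)\<^sup>*" using r unfolding reachable_def .
  then show ?thesis
  proof (induction rule: rtrancl_induct)
    case base
    then show ?case using v unfolding valid_crn_def init_config_def by auto
  next
    case (step y z)
    obtain rp where rp: "rp \<in> R" "z = apply_reaction rp y"
      using step(2) unfolding step_rel_def by blast
    obtain r p where rpe: "rp = (r, p)" by fastforce
    have "\<forall>s. s \<notin> S \<longrightarrow> r s = 0 \<and> p s = 0" using v rp(1) rpe unfolding valid_crn_def by blast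
    then show ?case using step(3) rp(2) rpe unfolding apply_reaction_def by auto
  qed
qed

lemma init_add:
  assumes "X \<noteq> L"
  shows "init_config X L (x + m) = addc (init_config X L x) (xs X m)"
  using assms unfolding init_config_def addc_def xs_def by (auto intro!: ext)



locale crn =
  fixes S :: "nat set" and R :: "reaction set" and X Y L :: nat and f :: "nat \<Rightarrow> nat"
  assumes valid: "valid_crn S R X Y L" and obl: "output_oblivious R Y"
    and sc: "stably_computes R X Y L f"
begin

lemma XL: "X \<noteq> L" and XY: "X \<noteq> Y" and YS: "Y \<in> S" and finS: "finite S"
  using valid unfolding valid_crn_def by auto

lemma exists_out:
  assumes "reachable R (init_config X L x) C"
  shows "\<exists>Z. reachable R C Z \<and> stable R Y Z \<and> Z Y = f x"
  using sc assms unfolding stably_computes_def by blast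

lemma f_bound:
  assumes "reachable R (init_config X L x) C"
  shows "C Y \<le> f x"
proof -
  obtain Z where Z: "reachable R C Z" "Z Y = f x" using exists_out[OF assms] by blast
  have "C Y \<le> Z Y" using obl_mono[OF obl Z(1)] .
  then show ?thesis using Z(2) by simp
qed

lemma stable_val:
  assumes "reachable R (init_config X L x) C" "stable R Y C"
  shows "C Y = f x"
proof -
  obtain Z where Z: "reachable R C Z" "Z Y = f x" using exists_out[OF assms(1)] by blast
  have "Z Y = C Y" using assms(2) Z(1) unfolding stable_def by blast
  then show ?thesis using Z(2) by simp
qed

primrec chn :: "nat \<Rightarrow> config" where
  "chn 0 = (SOME Z. reachable R (init_config X L 0) Z \<and> stable R Y Z \<and> Z Y = f 0)"
| "chn (Suc y) = (SOME Z. reachable R (addc (chn y) (xs X 1)) Z \<and> stable R Y Z \<and> Z Y = f (Suc y))"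

lemma chn_prop: "reachable R (init_config X L y) (chn y) \<and> stable R Y (chn y) \<and> chn y Y = f y"
proof (induction y)
  case 0
  have "\<exists>Z. reachable R (init_config X L 0) Z \<and> stable R Y Z \<and> Z Y = f 0"
    using exists_out[OF reach_refl] by blast
  from someI_ex[OF this] show ?case by simp
next
  case (Suc y)
  have r1: "reachable R (init_config X L (Suc y)) (addc (chn y) (xs X 1))"
    using reach_add[OF conjunct1[OF Suc.IH], of "xs X 1"] init_add[OF XL, of y 1] by simp
  have "\<exists>Z. reachable R (addc (chn y) (xs X 1)) Z \<and> stable R Y Z \<and> Z Y = f (Suc y)"
    using exists_out[OF r1] by blast
  from someI_ex[OF this] have "reachable R (addc (chn y) (xs X 1)) (chn (Suc y)) \<and> stable R Y (chn (Suc y)) \<and> chn (Suc y) Y = f (Suc y)"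
    by simp
  then show ?case using r1 reach_trans by blast
qed

lemma init_Suc_reach: "reachable R (init_config X L (Suc y)) (addc (chn y) (xs X 1))"
proof -
  have e: "init_config X L (Suc y) = addc (init_config X L y) (xs X 1)"
    using init_add[OF XL, where x=y and m=1] by simp
  have r: "reachable R (addc (init_config X L y) (xs X 1)) (addc (chn y) (xs X 1))"
    using reach_add[OF conjunct1[OF chn_prop[of y]], where E="xs X 1"] .
  show ?thesis unfolding e by (rule r)
qed

lemma chn_Suc: "reachable R (addc (chn y) (xs X 1)) (chn (Suc y))"
proof -
  have r1: "reachable R (init_config X L (Suc y)) (addc (chn y) (xs X 1))"
    by (rule init_Suc_reach)
  have "\<exists>Z. reachable R (addc (chn y) (xs X 1)) Z \<and> stable R Y Z \<and> Z Y = f (Suc y)"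
    using exists_out[OF r1] by blast
  from conjunct1[OF someI_ex[OF this]] show ?thesis by (simp only: chn.simps)
qed

lemma chn_adv: "reachable R (addc (chn y) (xs X m)) (chn (y + m))"
proof (induction m)
  case 0 then show ?case using reach_refl by simp
next
  case (Suc m)
  have eq: "addc (chn y) (xs X (Suc m)) = addc (addc (chn y) (xs X m)) (xs X 1)"
    using xs_add[of X m 1] addc_assoc by simp
  have "reachable R (addc (chn y) (xs X (Suc m))) (addc (chn (y + m)) (xs X 1))"
    using reach_add[OF Suc.IH, where E="xs X 1"] eq by simp
  from reach_trans[OF this chn_Suc[of "y + m"]] show ?case by simp
qed

lemma f_mono: "mono f"
  unfolding mono_iff_le_Suc
proof
  fix y
  have r1: "reachable R (init_config X L (Suc y)) (addc (chn y) (xs X 1))"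
    by (rule init_Suc_reach)
  have "addc (chn y) (xs X 1) Y = f y" using chn_prop[of y] XY unfolding addc_def xs_def by simp
  then show "f y \<le> f (Suc y)" using f_bound[OF r1] by simp
qed

lemma chn_supp: "s \<notin> S \<Longrightarrow> chn y s = 0"
  using support[OF valid conjunct1[OF chn_prop[of y]]] by blast


lemma chn_le_supp: "(\<forall>s\<in>S. chn i s \<le> chn j s) \<Longrightarrow> chn i s \<le> chn j s"
  using chn_supp by (cases "s \<in> S") auto

lemma evper: "\<exists>N P c. P > 0 \<and> (\<forall>x\<ge>N. f (x + P) = f x + c)"
proof -
  obtain \<sigma> :: "nat \<Rightarrow> nat" where sm: "strict_mono \<sigma>"
    and dm: "\<forall>s\<in>S. \<forall>k k'. k \<le> k' \<longrightarrow> chn (\<sigma> k) s \<le> chn (\<sigma> k') s"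
    using dickson[OF finS, of "\<lambda>k. chn k"] by blast
  define V where "V = (\<lambda>k. chn (\<sigma> k))"
  have Vm: "\<And>s k k'. s \<in> S \<Longrightarrow> k \<le> k' \<Longrightarrow> V k s \<le> V k' s" using dm unfolding V_def by blast
  define Bd where "Bd = {s\<in>S. \<exists>M. \<forall>k. V k s \<le> M}"
  have finBd: "finite Bd" using finS unfolding Bd_def by simp
  have "\<forall>s\<in>Bd. \<exists>K. \<forall>k\<ge>K. V k s = V K s"
  proof
    fix s assume s: "s \<in> Bd"
    then obtain M where M: "\<And>k. V k s \<le> M" and sS: "s \<in> S" unfolding Bd_def by blast
    show "\<exists>K. \<forall>k\<ge>K. V k s = V K s"
      by (rule bdd_mono_evconst[of "\<lambda>k. V k s" M]) (use Vm[OF sS] M in auto)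
  qed
  then obtain Kf where Kf: "\<And>s k. s \<in> Bd \<Longrightarrow> k \<ge> Kf s \<Longrightarrow> V k s = V (Kf s) s" by metis
  define K0 where "K0 = Max (insert 0 (Kf ` Bd))"
  have K0: "\<And>s k. s \<in> Bd \<Longrightarrow> k \<ge> K0 \<Longrightarrow> V k s = V K0 s"
  proof -
    fix s k assume s: "s \<in> Bd" and k: "k \<ge> K0"
    have "Kf s \<le> K0" unfolding K0_def using finBd s by (intro Max_ge) auto
    then have "V k s = V (Kf s) s" "V K0 s = V (Kf s) s" using Kf[OF s, of k] Kf[OF s, of K0] k by auto
    then show "V k s = V K0 s" by simp
  qed
  have unb: "\<And>s M. s \<in> S \<Longrightarrow> s \<notin> Bd \<Longrightarrow> \<exists>k0. \<forall>k\<ge>k0. M \<le> V k s"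
  proof -
    fix s M assume sS: "s \<in> S" and sB: "s \<notin> Bd"
    then have "\<not> (\<forall>k. V k s \<le> M)" unfolding Bd_def by blast
    then obtain k0 where "M < V k0 s" by (meson not_le)
    then have "\<forall>k\<ge>k0. M \<le> V k s" using Vm[OF sS] by (meson less_imp_le order_trans)
    then show "\<exists>k0. \<forall>k\<ge>k0. M \<le> V k s" by blast
  qed
  define i where "i = \<sigma> K0"
  define j where "j = \<sigma> (Suc K0)"
  have ij: "i < j" unfolding i_def j_def using sm by (simp add: strict_mono_def)
  define P where "P = j - i"
  have P0: "P > 0" and jP: "j = i + P" using ij unfolding P_def by auto
  define E where "E = (\<lambda>s. chn j s - chn i s)"
  define c where "c = f j - f i"
  have leij: "\<And>s. chn i s \<le> chn j s"
  proof -
    fix s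
    have "\<forall>s\<in>S. chn i s \<le> chn j s" using dm unfolding i_def j_def by simp
    then show "chn i s \<le> chn j s" by (rule chn_le_supp)
  qed
  have chnj: "chn j = addc (chn i) E" unfolding addc_def E_def using leij by (auto intro!: ext)
  have EY: "E Y = c" unfolding E_def c_def using chn_prop[of i] chn_prop[of j] by simp
  have fi: "chn i Y = f i" using chn_prop[of i] by simp
  have Ebd: "\<And>s. s \<in> Bd \<Longrightarrow> E s = 0"
  proof -
    fix s assume "s \<in> Bd"
    then have "V (Suc K0) s = V K0 s" using K0[of s "Suc K0"] by simp
    then show "E s = 0" unfolding E_def V_def i_def j_def by simp
  qed
  have Eout: "\<And>s. s \<notin> S \<Longrightarrow> E s = 0" unfolding E_def using chn_supp by simp
  define Cn where "Cn = (\<lambda>n s. chn i s + n * E s)"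
  have stab: "\<And>n. stable R Y (Cn n)"
  proof -
    fix n
    have "\<forall>s\<in>S - Bd. \<exists>k0. \<forall>k\<ge>k0. Cn n s \<le> V k s" using unb by blast
    then obtain kf where kf: "\<And>s k. s \<in> S - Bd \<Longrightarrow> k \<ge> kf s \<Longrightarrow> Cn n s \<le> V k s" by metis
    define l where "l = Max (insert 0 (kf ` (S - Bd))) + K0"
    have le: "\<And>s. Cn n s \<le> V l s"
    proof -
      fix s
      show "Cn n s \<le> V l s"
      proof (cases "s \<in> S")
        case False
        then show ?thesis unfolding Cn_def using Eout chn_supp by simp
      next
        case True
        show ?thesis
        proof (cases "s \<in> Bd")
          case True
          then have "V l s = V K0 s" using K0[of s l] unfolding l_def by simp
          then show ?thesis unfolding Cn_def using Ebd[OF True] unfolding V_def i_def by simp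
        next
          case False
          then have sSB: "s \<in> S - Bd" using \<open>s \<in> S\<close> by simp
          have "kf s \<le> Max (insert 0 (kf ` (S - Bd)))" using finS sSB by (intro Max_ge) auto
          then have "kf s \<le> l" unfolding l_def by simp
          then show ?thesis using kf[OF sSB] by simp
        qed
      qed
    qed
    have "stable R Y (V l)" unfolding V_def using chn_prop by simp
    then show "stable R Y (Cn n)" using stable_down le by blast
  qed
  have reachn: "\<And>n. reachable R (init_config X L (i + n * P)) (Cn n)"
  proof -
    fix n
    show "reachable R (init_config X L (i + n * P)) (Cn n)"
    proof (induction n)
      case 0
      have "Cn 0 = chn i" unfolding Cn_def by (auto intro!: ext)
      then show ?case using chn_prop[of i] by simp
    next
      case (Suc n)
      have ee: "i + Suc n * P = (i + n * P) + P" by simp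
      have e1: "init_config X L (i + Suc n * P) = addc (init_config X L (i + n * P)) (xs X P)"
        unfolding ee by (rule init_add[OF XL])
      have r1: "reachable R (addc (init_config X L (i + n * P)) (xs X P)) (addc (Cn n) (xs X P))"
        using reach_add[OF Suc.IH, where E="xs X P"] .
      have e2: "addc (Cn n) (xs X P) = addc (addc (chn i) (xs X P)) (\<lambda>s. n * E s)"
        unfolding Cn_def addc_def by (auto intro!: ext)
      have r2: "reachable R (addc (addc (chn i) (xs X P)) (\<lambda>s. n * E s)) (addc (chn j) (\<lambda>s. n * E s))"
        using reach_add[OF chn_adv[of i P], where E="\<lambda>s. n * E s"] jP by simp
      have e3: "addc (chn j) (\<lambda>s. n * E s) = Cn (Suc n)"
        unfolding chnj Cn_def addc_def by (auto intro!: ext)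
      show ?case unfolding e1 using reach_trans[OF r1 reach_trans[OF _ r2]] e2 e3 reach_refl by metis
    qed
  qed
  have fprog: "\<And>n. f (i + n * P) = f i + n * c"
  proof -
    fix n
    have "Cn n Y = f (i + n * P)" using stable_val[OF reachn stab] .
    then show "f (i + n * P) = f i + n * c" unfolding Cn_def using fi EY by simp
  qed
  have lowb: "\<And>d. f (i + d) + c \<le> f (j + d)"
  proof -
    fix d
    have e1: "init_config X L (j + d) = addc (init_config X L j) (xs X d)"
      using init_add[OF XL, where x=j and m=d] .
    have r1: "reachable R (addc (init_config X L j) (xs X d)) (addc (chn j) (xs X d))"
      using reach_add[OF conjunct1[OF chn_prop[of j]], where E="xs X d"] .
    have e2: "addc (chn j) (xs X d) = addc (addc (chn i) (xs X d)) E"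
      unfolding chnj addc_def by (auto intro!: ext)
    have r2: "reachable R (addc (addc (chn i) (xs X d)) E) (addc (chn (i + d)) E)"
      using reach_add[OF chn_adv[of i d], where E=E] .
    have "reachable R (init_config X L (j + d)) (addc (chn (i + d)) E)"
      unfolding e1 using reach_trans[OF r1 r2[folded e2]] .
    then have "addc (chn (i + d)) E Y \<le> f (j + d)" by (rule f_bound)
    then show "f (i + d) + c \<le> f (j + d)" using chn_prop[of "i + d"] EY unfolding addc_def by simp
  qed
  have mf: "mono f" by (rule f_mono)
  have "\<forall>m\<in>{i..<i+P}. \<exists>K. \<forall>k\<ge>K. f (m + Suc k * P) = f (m + k * P) + c"
  proof
    fix m assume m: "m \<in> {i..<i+P}"
    have step: "\<And>k. f (m + k * P) + c \<le> f (m + Suc k * P)"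
    proof -
      fix k
      have "f (i + (m + k * P - i)) + c \<le> f (j + (m + k * P - i))" by (rule lowb)
      moreover have "i + (m + k * P - i) = m + k * P" using m by auto
      moreover have "j + (m + k * P - i) = m + Suc k * P" using m jP by auto
      ultimately show "f (m + k * P) + c \<le> f (m + Suc k * P)" by simp
    qed
    have lb: "\<And>k. f m + k * c \<le> f (m + k * P)"
    proof -
      fix k show "f m + k * c \<le> f (m + k * P)"
      proof (induction k)
        case 0 then show ?case by simp
      next
        case (Suc k) then show ?case using step[of k] by simp
      qed
    qed
    have ub: "\<And>k. f (m + k * P) \<le> f i + Suc k * c"
    proof -
      fix k
      have "m + k * P \<le> i + Suc k * P" using m by auto
      then have "f (m + k * P) \<le> f (i + Suc k * P)" by (rule monoD[OF mf])
      then show "f (m + k * P) \<le> f i + Suc k * c" using fprog[of "Suc k"] by simp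
    qed
    define a where "a = (\<lambda>k. f (m + k * P) - k * c)"
    have amono1: "\<And>k. a k \<le> a (Suc k)"
    proof -
      fix k
      show "a k \<le> a (Suc k)" unfolding a_def using step[of k] lb[of k] by simp
    qed
    have amono: "\<And>k k'. k \<le> k' \<Longrightarrow> a k \<le> a k'"
      using amono1 by (rule lift_Suc_mono_le)
    have abd: "\<And>k. a k \<le> f i + c"
    proof -
      fix k
      have "f (m + k * P) \<le> f i + Suc k * c" by (rule ub)
      then show "a k \<le> f i + c" unfolding a_def by simp
    qed
    obtain K where K: "\<forall>k\<ge>K. a k = a K" using bdd_mono_evconst[of a, OF amono abd] by blast
    have "\<forall>k\<ge>K. f (m + Suc k * P) = f (m + k * P) + c"
    proof (intro allI impI)
      fix k assume k: "K \<le> k"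
      have "a (Suc k) = a k" using K k by (metis le_SucI)
      then show "f (m + Suc k * P) = f (m + k * P) + c"
        unfolding a_def using lb[of k] lb[of "Suc k"] step[of k] by simp
    qed
    then show "\<exists>K. \<forall>k\<ge>K. f (m + Suc k * P) = f (m + k * P) + c" by blast
  qed
  then obtain Km where Km: "\<And>m k. m \<in> {i..<i+P} \<Longrightarrow> k \<ge> Km m \<Longrightarrow> f (m + Suc k * P) = f (m + k * P) + c"
    by metis
  define Kt where "Kt = Max (insert 0 (Km ` {i..<i+P}))"
  define N where "N = i + Kt * P"
  have "\<forall>x\<ge>N. f (x + P) = f x + c"
  proof (intro allI impI)
    fix x assume x: "N \<le> x"
    define m where "m = i + (x - i) mod P"
    define k where "k = (x - i) div P"
    have mr: "m \<in> {i..<i+P}" unfolding m_def using P0 by simp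
    have xe: "x = m + k * P" unfolding m_def k_def using x N_def
      by (metis add.assoc add.commute le_add1 le_add_diff_inverse le_trans mod_div_mult_eq)
    have "Kt * P \<le> x - i" using x unfolding N_def by simp
    then have "Kt \<le> k" unfolding k_def using P0 by (simp add: div_le_mono le_div_geq less_eq_div_iff_mult_less_eq)
    moreover have "Km m \<le> Kt" unfolding Kt_def using mr by (intro Max_ge) auto
    ultimately have "Km m \<le> k" by simp
    then have h1: "f (m + Suc k * P) = f (m + k * P) + c" using Km[OF mr] by blast
    have h2: "x + P = m + Suc k * P" using xe by simp
    have "f (x + P) = f (m + Suc k * P)" by (simp only: h2)
    also have "\<dots> = f (m + k * P) + c" by (rule h1)
    also have "f (m + k * P) = f x" using xe by simp
    finally show "f (x + P) = f x + c" .
  qed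
  then show ?thesis using P0 by blast
qed

end



lemma sl_single: "semilinear_set {k}"
proof -
  have "{k} = {x. (1::int) * int x \<ge> int k} \<inter> {x. (-1::int) * int x \<ge> - int k}" by auto
  then show ?thesis by (simp only:) (intro semilinear_set.inter semilinear_set.threshold)
qed

lemma sl_res: assumes "P > 0" "r < P" shows "semilinear_set {x. N \<le> x \<and> x mod P = r}"
proof -
  have "{x. N \<le> x \<and> x mod P = r} = {x. (1::int) * int x \<ge> int N} \<inter> {x. (1::int) * int x mod int P = int r mod int P}"
  proof (intro set_eqI iffI)
    fix x assume "x \<in> {x. N \<le> x \<and> x mod P = r}"
    then show "x \<in> {x. (1::int) * int x \<ge> int N} \<inter> {x. (1::int) * int x mod int P = int r mod int P}"
      by (auto simp flip: of_nat_mod)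
  next
    fix x assume x: "x \<in> {x. (1::int) * int x \<ge> int N} \<inter> {x. (1::int) * int x mod int P = int r mod int P}"
    then have "int (x mod P) = int (r mod P)" by (simp add: of_nat_mod)
    then have "x mod P = r" using assms by simp
    then show "x \<in> {x. N \<le> x \<and> x mod P = r}" using x by simp
  qed
  then show ?thesis by (simp only:) (intro semilinear_set.inter semilinear_set.threshold semilinear_set.modset assms(1))
qed

lemma per_iter_g:
  assumes per: "\<forall>x\<ge>N. f (x + P) = f x + (c::nat)" and x: "x \<ge> N"
  shows "f (x + m * P) = f x + m * c"
proof (induction m)
  case 0 then show ?case by simp
next
  case (Suc m)
  have e: "x + Suc m * P = (x + m * P) + P" by simp
  have "f ((x + m * P) + P) = f (x + m * P) + c" using per x by simp
  then show ?case unfolding e using Suc.IH by simp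
qed

lemma per_semilinear:
  assumes P0: "P > 0" and per: "\<forall>x\<ge>N. f (x + P) = f x + (c::nat)"
  shows "semilinear_fun f"
proof -
  define sl :: rat where "sl = of_nat c / of_nat P"
  define e where "e = (\<lambda>r. N * P + r)"
  define pc where "pc = (\<lambda>k. if k < N then ((0::rat), (of_nat (f k) :: rat), {k})
      else (sl, of_nat (f (e (k - N))) - sl * of_nat (e (k - N)), {x. N \<le> x \<and> x mod P = k - N}))"
  define pieces where "pieces = map pc [0..<N+P]"
  have len: "length pieces = N + P" unfolding pieces_def by simp
  have nth: "\<And>k. k < N + P \<Longrightarrow> pieces ! k = pc k" unfolding pieces_def by simp
  have key: "\<And>x y. N \<le> x \<Longrightarrow> x \<le> y \<Longrightarrow> x mod P = y mod P \<Longrightarrow>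
      (of_nat (f y) :: rat) - sl * of_nat y = of_nat (f x) - sl * of_nat x"
  proof -
    fix x y assume xN: "N \<le> x" and xy: "x \<le> y" and md: "x mod P = y mod P"
    define m where "m = (y - x) div P"
    have "P dvd (y - x)" using mod_eq_dvd_iff_nat[OF xy, of P] md by simp
    then obtain q where q: "y - x = P * q" by (auto elim: dvdE)
    have "m = q" unfolding m_def q using P0 by simp
    then have ye: "y = x + m * P" using q xy by (simp add: mult.commute)
    have "f y = f x + m * c" using per_iter_g[OF per xN, of m] ye by simp
    then have fy: "(of_nat (f y) :: rat) = of_nat (f x) + of_nat m * of_nat c" by simp
    have yy: "(of_nat y :: rat) = of_nat x + of_nat m * of_nat P" using ye by simp
    have sP: "sl * of_nat P = of_nat c" unfolding sl_def using P0 by simp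
    have "sl * (of_nat x + of_nat m * of_nat P) = sl * of_nat x + of_nat m * (sl * of_nat P)"
      by (simp add: algebra_simps)
    then have "sl * of_nat y = sl * of_nat x + of_nat m * of_nat c" unfolding yy sP .
    then show "(of_nat (f y) :: rat) - sl * of_nat y = of_nat (f x) - sl * of_nat x"
      unfolding fy by simp
  qed
  have NP: "N * 1 \<le> N * P" by (rule mult_le_mono2) (use P0 in simp)
  have eN: "\<And>r. N \<le> e r" unfolding e_def using NP by (simp only: mult.right_neutral)
  have emod: "\<And>r. r < P \<Longrightarrow> e r mod P = r" unfolding e_def by simp
  show ?thesis unfolding semilinear_fun_def
  proof (intro exI[where x=pieces] conjI allI impI ballI)
    fix i assume i: "i < length pieces"
    then show "semilinear_set (snd (snd (pieces ! i)))"
      using nth len sl_single sl_res[OF P0] unfolding pc_def by (cases "i < N") auto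
  next
    fix i j assume i: "i < length pieces" and j: "j < length pieces" and ij: "i \<noteq> j"
    show "snd (snd (pieces ! i)) \<inter> snd (snd (pieces ! j)) = {}"
      using i j ij nth len unfolding pc_def by (cases "i < N"; cases "j < N") auto
  next
    fix x
    show "\<exists>i<length pieces. x \<in> snd (snd (pieces ! i))"
    proof (cases "x < N")
      case True
      then show ?thesis using nth len unfolding pc_def by (intro exI[where x=x]) auto
    next
      case False
      have "N + x mod P < N + P" using P0 by simp
      then show ?thesis using nth len False unfolding pc_def by (intro exI[where x="N + x mod P"]) auto
    qed
  next
    fix i x assume i: "i < length pieces" and x: "x \<in> snd (snd (pieces ! i))"
    show "of_nat (f x) = fst (pieces ! i) * of_nat x + fst (snd (pieces ! i))"
    proof (cases "i < N")
      case True
      then show ?thesis using x nth[of i] i len unfolding pc_def by simp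
    next
      case False
      define r where "r = i - N"
      have r: "r < P" using i len False unfolding r_def by simp
      have pi: "pieces ! i = (sl, of_nat (f (e r)) - sl * of_nat (e r), {x. N \<le> x \<and> x mod P = r})"
        using nth[of i] i len False unfolding pc_def r_def by simp
      have xN: "N \<le> x" and xm: "x mod P = r" using x pi by auto
      have md: "x mod P = e r mod P" using xm emod[OF r] by simp
      have "(of_nat (f x) :: rat) - sl * of_nat x = of_nat (f (e r)) - sl * of_nat (e r)"
      proof (cases "x \<le> e r")
        case True then show ?thesis using key[OF xN True md] by simp
      next
        case False then show ?thesis using key[OF eN[of r] _ md[symmetric]] by simp
      qed
      then show ?thesis using pi by (simp add: algebra_simps)
    qed
  qed
qed



definition perset :: "nat set \<Rightarrow> nat \<Rightarrow> nat \<Rightarrow> bool" where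
  "perset A N P \<longleftrightarrow> (\<forall>x\<ge>N. x \<in> A \<longleftrightarrow> x + P \<in> A)"

lemma persetD: "perset A N P \<Longrightarrow> N \<le> x \<Longrightarrow> (x \<in> A \<longleftrightarrow> x + P \<in> A)"
  unfolding perset_def by blast

lemma perset_mult:
  assumes "perset A N P" "x \<ge> N"
  shows "x \<in> A \<longleftrightarrow> x + k * P \<in> A"
proof (induction k)
  case 0 then show ?case by simp
next
  case (Suc k)
  have e: "x + Suc k * P = (x + k * P) + P" by simp
  have "x + k * P \<ge> N" using assms(2) by simp
  then have "x + k * P \<in> A \<longleftrightarrow> (x + k * P) + P \<in> A" using assms(1) unfolding perset_def by blast
  then show ?case unfolding e using Suc.IH by simp
qed

lemma perset_mono:
  assumes "perset A N P" "N \<le> N'"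
  shows "perset A N' (k * P)"
  unfolding perset_def using perset_mult[OF assms(1)] assms(2) by (meson le_trans)

lemma thr_pos: "(1::int) * z \<le> w \<Longrightarrow> \<bar>b\<bar> < z \<Longrightarrow> b \<le> w" by linarith
lemma thr_neg: "w \<le> (-1::int) * z \<Longrightarrow> \<bar>b\<bar> < z \<Longrightarrow> \<not> b \<le> w" by linarith

lemma sl_per:
  assumes "semilinear_set A"
  shows "\<exists>N P. P > 0 \<and> perset A N P"
  using assms
proof (induction rule: semilinear_set.induct)
  case (threshold a b)
  define N where "N = nat \<bar>b\<bar> + 1"
  have "perset {x. b \<le> a * int x} N 1" unfolding perset_def
  proof (intro allI impI)
    fix x assume x: "N \<le> x"
    then have xb: "int x > \<bar>b\<bar>" unfolding N_def by simp
    have xb2: "int (x + 1) > \<bar>b\<bar>" using xb by simp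
    show "x \<in> {x. b \<le> a * int x} \<longleftrightarrow> x + 1 \<in> {x. b \<le> a * int x}"
    proof (cases "a > 0")
      case True
      have h1: "a * int x \<ge> 1 * int x" using True by (intro mult_right_mono) simp_all
      have h2: "a * int (x + 1) \<ge> 1 * int (x + 1)" using True by (intro mult_right_mono) simp_all
      have "b \<le> a * int x" by (rule thr_pos[OF h1 xb])
      moreover have "b \<le> a * int (x + 1)" by (rule thr_pos[OF h2 xb2])
      ultimately show ?thesis by simp
    next
      case False
      show ?thesis
      proof (cases "a = 0")
        case True then show ?thesis by simp
      next
        case False
        then have "a \<le> -1" using \<open>\<not> a > 0\<close> by simp
        have h1: "a * int x \<le> (-1) * int x" using \<open>a \<le> -1\<close> by (intro mult_right_mono) simp_all
        have h2: "a * int (x + 1) \<le> (-1) * int (x + 1)" using \<open>a \<le> -1\<close> by (intro mult_right_mono) simp_all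
        have "\<not> b \<le> a * int x" by (rule thr_neg[OF h1 xb])
        moreover have "\<not> b \<le> a * int (x + 1)" by (rule thr_neg[OF h2 xb2])
        ultimately show ?thesis by simp
      qed
    qed
  qed
  then show ?case by blast
next
  case (modset c a b)
  have "perset {x. a * int x mod int c = b mod int c} 0 c" unfolding perset_def
  proof (intro allI impI)
    fix x :: nat
    have "a * int (x + c) mod int c = (a * int x + a * int c) mod int c" by (simp add: algebra_simps)
    also have "\<dots> = a * int x mod int c" by simp
    finally show "x \<in> {x. a * int x mod int c = b mod int c} \<longleftrightarrow> x + c \<in> {x. a * int x mod int c = b mod int c}"
      by simp
  qed
  then show ?case using modset.hyps by blast
next
  case (compl A)
  then obtain N P where NP: "P > 0" "perset A N P" by blast
  have "perset (- A) N P" using NP(2) unfolding perset_def by (metis Compl_iff)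
  then show ?case using NP(1) by blast
next
  case (union A B)
  then obtain N1 P1 N2 P2 where a: "P1 > 0" "perset A N1 P1" and b: "P2 > 0" "perset B N2 P2" by blast
  have "perset A (max N1 N2) (P2 * P1)" by (rule perset_mono[OF a(2)]) simp
  moreover have "perset B (max N1 N2) (P1 * P2)" by (rule perset_mono[OF b(2)]) simp
  ultimately have "perset (A \<union> B) (max N1 N2) (P1 * P2)" unfolding perset_def by (metis mult.commute Un_iff)
  moreover have "P1 * P2 > 0" using a(1) b(1) by simp
  ultimately show ?case by blast
next
  case (inter A B)
  then obtain N1 P1 N2 P2 where a: "P1 > 0" "perset A N1 P1" and b: "P2 > 0" "perset B N2 P2" by blast
  have "perset A (max N1 N2) (P2 * P1)" by (rule perset_mono[OF a(2)]) simp
  moreover have "perset B (max N1 N2) (P1 * P2)" by (rule perset_mono[OF b(2)]) simp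
  ultimately have "perset (A \<inter> B) (max N1 N2) (P1 * P2)" unfolding perset_def by (metis mult.commute Int_iff)
  moreover have "P1 * P2 > 0" using a(1) b(1) by simp
  ultimately show ?case by blast
qed

lemma semilinear_per:
  assumes sf: "semilinear_fun f" and mf: "mono f"
  shows "\<exists>N P c. P > 0 \<and> (\<forall>x\<ge>N. f (x + P) = f x + c)"
proof -
  obtain pieces :: "(rat \<times> rat \<times> nat set) list" where
    p1: "\<forall>i < length pieces. semilinear_set (snd (snd (pieces ! i)))" and
    p3: "\<forall>x. \<exists>i < length pieces. x \<in> snd (snd (pieces ! i))" and
    p4: "\<forall>i < length pieces. \<forall>x \<in> snd (snd (pieces ! i)).
            of_nat (f x) = fst (pieces ! i) * of_nat x + fst (snd (pieces ! i))"
    using sf unfolding semilinear_fun_def by blast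
  define n where "n = length pieces"
  define D where "D = (\<lambda>i. snd (snd (pieces ! i)))"
  define a where "a = (\<lambda>i. fst (pieces ! i))"
  define b where "b = (\<lambda>i. fst (snd (pieces ! i)))"
  have "\<forall>i<n. \<exists>N P. P > 0 \<and> perset (D i) N P"
    using p1 sl_per unfolding n_def D_def by blast
  then obtain Nf Pf where NPf: "\<And>i. i < n \<Longrightarrow> Pf i > 0 \<and> perset (D i) (Nf i) (Pf i)" by metis
  define N where "N = Max (insert 0 (Nf ` {..<n}))"
  define P where "P = (\<Prod>i<n. Pf i)"
  have P0: "P > 0" unfolding P_def using NPf by (simp add: prod_pos)
  have perD: "\<And>i. i < n \<Longrightarrow> perset (D i) N P"
  proof -
    fix i assume i: "i < n"
    have "Pf i dvd P" unfolding P_def using i by (intro dvd_prodI) auto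
    then obtain k where k: "P = k * Pf i" by (metis dvd_def mult.commute)
    have "Nf i \<le> N" unfolding N_def using i by (intro Max_ge) auto
    then show "perset (D i) N P" unfolding k using NPf[OF i] by (intro perset_mono) auto
  qed
  have fD: "\<And>i z. i < n \<Longrightarrow> z \<in> D i \<Longrightarrow> (of_nat (f z) :: rat) = a i * of_nat z + b i"
    using p4 unfolding n_def D_def a_def b_def by blast
  define g where "g = (\<lambda>x. int (f (x + P)) - int (f x))"
  have gper: "\<And>x. N \<le> x \<Longrightarrow> g (x + P) = g x"
  proof -
    fix x assume x: "N \<le> x"
    obtain i where i: "i < n" "x \<in> D i" using p3 unfolding n_def D_def by blast
    have x1: "x + P \<in> D i" using persetD[OF perD[OF i(1)] x] i(2) by blast
    have xP: "N \<le> x + P" using x by simp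
    have x2: "x + P + P \<in> D i" using persetD[OF perD[OF i(1)] xP] x1 by blast
    have "(of_int (g x) :: rat) = of_nat (f (x + P)) - of_nat (f x)" unfolding g_def by simp
    also have "\<dots> = a i * of_nat P" using fD[OF i(1) x1] fD[OF i] by (simp add: algebra_simps)
    finally have g1: "(of_int (g x) :: rat) = a i * of_nat P" .
    have "(of_int (g (x + P)) :: rat) = of_nat (f (x + P + P)) - of_nat (f (x + P))" unfolding g_def by simp
    also have "\<dots> = a i * of_nat P" using fD[OF i(1) x1] fD[OF i(1) x2] by (simp add: algebra_simps)
    finally have g2: "(of_int (g (x + P)) :: rat) = a i * of_nat P" .
    from g1 g2 have "(of_int (g (x + P)) :: rat) = of_int (g x)" by simp
    then show "g (x + P) = g x" by (simp only: of_int_eq_iff)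
  qed
  have giter: "\<And>x k. N \<le> x \<Longrightarrow> g (x + k * P) = g x"
  proof -
    fix x k assume x: "N \<le> x"
    show "g (x + k * P) = g x"
    proof (induction k)
      case 0 then show ?case by simp
    next
      case (Suc k)
      have e: "x + Suc k * P = (x + k * P) + P" by simp
      have "N \<le> x + k * P" using x by simp
      then show ?case unfolding e using gper Suc.IH by simp
    qed
  qed
  have fiter: "\<And>x k. N \<le> x \<Longrightarrow> int (f (x + k * P)) = int (f x) + int k * g x"
  proof -
    fix x k assume x: "N \<le> x"
    show "int (f (x + k * P)) = int (f x) + int k * g x"
    proof (induction k)
      case 0 then show ?case by simp
    next
      case (Suc k)
      have e: "x + Suc k * P = (x + k * P) + P" by simp
      have "int (f ((x + k * P) + P)) = int (f (x + k * P)) + g (x + k * P)" unfolding g_def by simp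
      also have "\<dots> = int (f x) + int k * g x + g x" using Suc.IH giter[OF x] by simp
      finally show ?case unfolding e by (simp add: algebra_simps)
    qed
  qed
  have gmono: "\<And>x. N \<le> x \<Longrightarrow> g x \<le> g (Suc x)"
  proof (rule ccontr)
    fix x assume x: "N \<le> x" and ng: "\<not> g x \<le> g (Suc x)"
    have x': "N \<le> Suc x" using x by simp
    define k where "k = f (Suc x) - f x + 1"
    have fm: "f x \<le> f (Suc x)" using mf by (simp add: monoD)
    have "f (x + k * P) \<le> f (Suc x + k * P)" using mf by (simp add: monoD)
    then have "int (f x) + int k * g x \<le> int (f (Suc x)) + int k * g (Suc x)"
      using fiter[OF x, of k] fiter[OF x', of k] by simp
    then have le1: "int k * (g x - g (Suc x)) \<le> int (f (Suc x)) - int (f x)" by (simp add: algebra_simps)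
    have "int k * 1 \<le> int k * (g x - g (Suc x))" using ng by (intro mult_left_mono) auto
    then have "int k \<le> int (f (Suc x)) - int (f x)" using le1 by simp
    moreover have "int k = int (f (Suc x)) - int (f x) + 1" unfolding k_def using fm by simp
    ultimately show False by simp
  qed
  have gchain: "\<And>r d. g (N + r) \<le> g (N + r + d)"
  proof -
    fix r d show "g (N + r) \<le> g (N + r + d)"
    proof (induction d)
      case 0 then show ?case by simp
    next
      case (Suc d)
      have "g (N + r + d) \<le> g (Suc (N + r + d))" by (rule gmono) simp
      then show ?case using Suc.IH by simp
    qed
  qed
  have gconst: "\<And>x. N \<le> x \<Longrightarrow> g x = g N"
  proof -
    fix x assume x: "N \<le> x"
    define r where "r = (x - N) mod P"
    define m where "m = (x - N) div P"
    have xe: "x = (N + r) + m * P" unfolding r_def m_def using x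
      by (metis add.assoc le_add_diff_inverse mod_div_mult_eq)
    have rP: "r < P" unfolding r_def using P0 by simp
    have "g x = g (N + r)" unfolding xe by (rule giter) simp
    moreover have "g N \<le> g (N + r)" using gchain[of 0 r] by simp
    moreover have "g (N + r) \<le> g (N + r + (P - r))" by (rule gchain)
    moreover have "N + r + (P - r) = N + 1 * P" using rP by simp
    moreover have "g (N + 1 * P) = g N" by (rule giter) simp
    ultimately show "g x = g N" by simp
  qed
  have g0: "g N \<ge> 0" unfolding g_def using mf by (simp add: monoD)
  have "\<forall>x\<ge>N. f (x + P) = f x + nat (g N)"
  proof (intro allI impI)
    fix x assume x: "N \<le> x"
    have "int (f (x + P)) = int (f x) + g x" unfolding g_def by simp
    then have "int (f (x + P)) = int (f x) + g N" using gconst[OF x] by simp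
    then show "f (x + P) = f x + nat (g N)" using g0 by simp
  qed
  then show ?thesis using P0 by blast
qed



primrec stN :: "nat \<Rightarrow> nat \<Rightarrow> nat \<Rightarrow> nat" where
  "stN N M 0 = 0"
| "stN N M (Suc k) = (if Suc (stN N M k) < M then Suc (stN N M k) else N)"

locale cons =
  fixes f :: "nat \<Rightarrow> nat" and N P c :: nat
  assumes mf: "mono f" and P0: "P > 0" and per: "\<forall>x\<ge>N. f (x + P) = f x + c"
begin

definition M where "M = N + P"
definition nx where "nx t = (if Suc t < M then Suc t else N)"
definition dd where "dd t = f (Suc t) - f t"
definition r0 :: reaction where
  "r0 = (\<lambda>s. if s = 2 then 1 else 0, \<lambda>s. if s = 3 then 1 else if s = 1 then f 0 else 0)"
definition rt :: "nat \<Rightarrow> reaction" where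
  "rt t = (\<lambda>s. if s = 3 + t then 1 else if s = 0 then 1 else 0,
           \<lambda>s. if s = 3 + nx t then 1 else if s = 1 then dd t else 0)"
definition RR :: "reaction set" where "RR = insert r0 (rt ` {..<M})"
definition SS :: "nat set" where "SS = {..<3 + M}"
abbreviation st where "st \<equiv> stN N M"
definition G :: "nat \<Rightarrow> nat \<Rightarrow> config" where
  "G x k = (\<lambda>s. if s = 0 then x - k else if s = 1 then f k else if s = 3 + st k then 1 else 0)"

lemma st_Suc: "st (Suc k) = nx (st k)" unfolding nx_def by simp

lemma nx_lt: "nx t < M" unfolding nx_def M_def using P0 by auto

lemma st_lt: "st k < M"
proof (cases k)
  case 0 then show ?thesis using P0 unfolding M_def by simp
next
  case (Suc k') then show ?thesis using st_Suc nx_lt by simp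
qed

lemma per_iter: "N \<le> y \<Longrightarrow> f (y + m * P) = f y + m * c"
proof (induction m)
  case 0 then show ?case by simp
next
  case (Suc m)
  have e: "y + Suc m * P = (y + m * P) + P" by simp
  have "f ((y + m * P) + P) = f (y + m * P) + c" using per Suc.prems by simp
  then show ?case unfolding e using Suc by simp
qed

lemma st_inv: "\<exists>m. k = st k + m * P \<and> (m > 0 \<longrightarrow> N \<le> st k)"
proof (induction k)
  case 0 then show ?case by (intro exI[where x=0]) simp
next
  case (Suc k)
  then obtain m where m: "k = st k + m * P" "m > 0 \<longrightarrow> N \<le> st k" by blast
  show ?case
  proof (cases "Suc (st k) < M")
    case True
    then have "st (Suc k) = Suc (st k)" by simp
    then show ?thesis using m by (intro exI[where x=m]) auto
  next
    case False
    then have s1: "st (Suc k) = N" by simp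
    have "st k < M" by (rule st_lt)
    then have "Suc (st k) = N + P" using False unfolding M_def by simp
    then have "Suc k = N + Suc m * P" using m(1) by simp
    then show ?thesis using s1 by (intro exI[where x="Suc m"]) simp
  qed
qed

lemma dd_st: "dd (st k) = f (Suc k) - f k"
proof -
  obtain m where m: "k = st k + m * P" "m > 0 \<longrightarrow> N \<le> st k" using st_inv by blast
  show ?thesis
  proof (cases "m = 0")
    case True then show ?thesis using m(1) unfolding dd_def by simp
  next
    case False
    then have Nst: "N \<le> st k" using m(2) by simp
    have a: "f k = f (st k) + m * c" using per_iter[OF Nst, of m] m(1) by simp
    have Nst1: "N \<le> Suc (st k)" using Nst by simp
    have b: "f (Suc k) = f (Suc (st k)) + m * c" using per_iter[OF Nst1, of m] m(1)
      by (metis add_Suc)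
    show ?thesis unfolding dd_def using a b by simp
  qed
qed

lemma init_eq: "init_config 0 2 x = (\<lambda>s. if s = 0 then x else if s = 2 then 1 else 0)"
  unfolding init_config_def by simp

lemma R_cases: "rp \<in> RR \<Longrightarrow> rp = r0 \<or> (\<exists>t<M. rp = rt t)"
  unfolding RR_def by auto

lemma step_init: "(init_config 0 2 x, D) \<in> step_rel RR \<Longrightarrow> D = G x 0"
proof -
  assume "(init_config 0 2 x, D) \<in> step_rel RR"
  then obtain rp where rp: "rp \<in> RR" "applicable rp (init_config 0 2 x)" "D = apply_reaction rp (init_config 0 2 x)"
    unfolding step_rel_def by blast
  have "rp = r0"
  proof (rule ccontr)
    assume "rp \<noteq> r0"
    then obtain t where t: "rp = rt t" using R_cases[OF rp(1)] by blast
    have "fst rp (3 + t) \<le> init_config 0 2 x (3 + t)" using rp(2) unfolding applicable_def by blast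
    then show False unfolding t rt_def init_config_def by simp
  qed
  then show "D = G x 0" using rp(3) unfolding r0_def G_def apply_reaction_def init_config_def
    by (auto intro!: ext)
qed

lemma step_G: "(G x k, D) \<in> step_rel RR \<Longrightarrow> k < x \<and> D = G x (Suc k)"
proof -
  assume "(G x k, D) \<in> step_rel RR"
  then obtain rp where rp: "rp \<in> RR" "applicable rp (G x k)" "D = apply_reaction rp (G x k)"
    unfolding step_rel_def by blast
  have ap: "\<And>s. fst rp s \<le> G x k s" using rp(2) unfolding applicable_def by blast
  have "rp \<noteq> r0"
  proof
    assume "rp = r0"
    then show False using ap[of 2] unfolding r0_def G_def by simp
  qed
  then obtain t where t: "t < M" "rp = rt t" using R_cases[OF rp(1)] by blast
  have "t = st k"
  proof (rule ccontr)
    assume "t \<noteq> st k"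
    then show False using ap[of "3 + t"] unfolding t rt_def G_def by simp
  qed
  have kx: "k < x" using ap[of 0] unfolding t rt_def G_def by simp
  have fm: "f k \<le> f (Suc k)" using mf by (simp add: monoD)
  have "D = G x (Suc k)"
    unfolding rp(3) t(2) rt_def G_def apply_reaction_def st_Suc \<open>t = st k\<close> dd_st
    using kx fm by (auto intro!: ext)
  then show ?thesis using kx by simp
qed

lemma G_step: "k < x \<Longrightarrow> (G x k, G x (Suc k)) \<in> step_rel RR"
proof -
  assume kx: "k < x"
  have rin: "rt (st k) \<in> RR" unfolding RR_def using st_lt by simp
  have app: "applicable (rt (st k)) (G x k)" unfolding applicable_def rt_def G_def using kx by auto
  have fm: "f k \<le> f (Suc k)" using mf by (simp add: monoD)
  have "apply_reaction (rt (st k)) (G x k) = G x (Suc k)"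
    unfolding rt_def G_def apply_reaction_def st_Suc dd_st using kx fm by (auto intro!: ext)
  then show ?thesis using step_relI[OF rin app] by simp
qed

lemma init_step: "(init_config 0 2 x, G x 0) \<in> step_rel RR"
proof -
  have rin: "r0 \<in> RR" unfolding RR_def by simp
  have app: "applicable r0 (init_config 0 2 x)" unfolding applicable_def r0_def init_config_def by auto
  have "apply_reaction r0 (init_config 0 2 x) = G x 0"
    unfolding r0_def G_def apply_reaction_def init_config_def by (auto intro!: ext)
  then show ?thesis using step_relI[OF rin app] by simp
qed

lemma reach_chars: "reachable RR (init_config 0 2 x) C \<Longrightarrow> C = init_config 0 2 x \<or> (\<exists>k\<le>x. C = G x k)"
proof -
  assume "reachable RR (init_config 0 2 x) C"
  then have "(init_config 0 2 x, C) \<in> (step_rel RR)\<^sup>*" unfolding reachable_def .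
  then show ?thesis
  proof (induction rule: rtrancl_induct)
    case base then show ?case by simp
  next
    case (step y z)
    from step(3) show ?case
    proof
      assume "y = init_config 0 2 x"
      then show ?case using step_init step(2) by blast
    next
      assume "\<exists>k\<le>x. y = G x k"
      then obtain k where "k \<le> x" "y = G x k" by blast
      then show ?case using step_G step(2) by (metis Suc_leI)
    qed
  qed
qed

lemma G_reach: "k \<le> x \<Longrightarrow> reachable RR (G x k) (G x x)"
proof (induction "x - k" arbitrary: k)
  case 0 then show ?case using reach_refl by simp
next
  case (Suc n)
  then have kx: "k < x" by simp
  have "reachable RR (G x (Suc k)) (G x x)" using Suc kx by simp
  moreover have "reachable RR (G x k) (G x (Suc k))" using G_step[OF kx] unfolding reachable_def by simp
  ultimately show ?case using reach_trans by blast
qed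

lemma G_stable: "stable RR 1 (G x x)"
  unfolding stable_def
proof (intro allI impI)
  fix D assume "reachable RR (G x x) D"
  then have "(G x x, D) \<in> (step_rel RR)\<^sup>*" unfolding reachable_def .
  then have "D = G x x"
  proof (induction rule: rtrancl_induct)
    case base then show ?case by simp
  next
    case (step y z)
    then show ?case using step_G by blast
  qed
  then show "D 1 = G x x 1" by simp
qed

lemma computes: "obliviously_computable f"
  unfolding obliviously_computable_def
proof (intro exI conjI)
  show "valid_crn SS RR 0 1 2"
    unfolding valid_crn_def
  proof (intro conjI)
    show "finite SS" unfolding SS_def by simp
    show "finite RR" unfolding RR_def by simp
    show "0 \<in> SS" "1 \<in> SS" "2 \<in> SS" unfolding SS_def by auto
    show "(0::nat) \<noteq> 1" "(0::nat) \<noteq> 2" "(1::nat) \<noteq> 2" by auto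
    have H: "\<forall>rp\<in>RR. \<forall>s. s \<notin> SS \<longrightarrow> fst rp s = 0 \<and> snd rp s = 0"
    proof (intro ballI allI impI)
      fix rp s assume rp: "rp \<in> RR" and s: "s \<notin> SS"
      then have sM: "3 + M \<le> s" unfolding SS_def by simp
      show "fst rp s = 0 \<and> snd rp s = 0"
      proof (cases "rp = r0")
        case True then show ?thesis using sM P0 unfolding r0_def M_def by auto
      next
        case False
        then obtain t where t: "t < M" "rp = rt t" using R_cases[OF rp] by blast
        have "nx t < M" by (rule nx_lt)
        then show ?thesis using sM t unfolding rt_def by auto
      qed
    qed
    then show "\<forall>(r, p)\<in>RR. \<forall>s. s \<notin> SS \<longrightarrow> r s = 0 \<and> p s = 0"
      by (auto simp: case_prod_beta)
  qed
  show "output_oblivious RR 1"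
    unfolding output_oblivious_def RR_def r0_def rt_def by auto
  show "stably_computes RR 0 1 2 f"
    unfolding stably_computes_def
  proof (intro allI impI)
    fix x C assume r: "reachable RR (init_config 0 2 x) C"
    have "reachable RR C (G x x)"
      using reach_chars[OF r]
    proof
      assume "C = init_config 0 2 x"
      moreover have "reachable RR (init_config 0 2 x) (G x 0)" using init_step[of x] unfolding reachable_def by (rule r_into_rtrancl)
      ultimately show ?thesis using G_reach[of 0 x] reach_trans by blast
    next
      assume "\<exists>k\<le>x. C = G x k"
      then show ?thesis using G_reach by blast
    qed
    moreover have "G x x 1 = f x" unfolding G_def by simp
    ultimately show "\<exists>Out. reachable RR C Out \<and> stable RR 1 Out \<and> Out 1 = f x"
      using G_stable by blast
  qed
qed

end


theorem theorem8:
  fixes f :: "nat \<Rightarrow> nat"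
  shows "obliviously_computable f \<longleftrightarrow> semilinear_fun f \<and> mono f"
proof
  assume "obliviously_computable f"
  then obtain S R X Y L where v: "valid_crn S R X Y L" and o: "output_oblivious R Y"
    and s: "stably_computes R X Y L f"
    unfolding obliviously_computable_def by blast
  interpret crn S R X Y L f using v o s by unfold_locales
  obtain N P c where "P > 0" "\<forall>x\<ge>N. f (x + P) = f x + c" using evper by blast
  then have "semilinear_fun f" by (rule per_semilinear)
  then show "semilinear_fun f \<and> mono f" using f_mono by simp
next
  assume a: "semilinear_fun f \<and> mono f"
  then obtain N P c where "P > 0" "\<forall>x\<ge>N. f (x + P) = f x + c"
    using semilinear_per by blast
  then interpret cons f N P c using a by unfold_locales auto
  show "obliviously_computable f" by (rule computes)
qed

end
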